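(* Let $n>1$ and $1\le m\le n(n-1)$ be integers, and for each integer $i\ge1$ let $e_i=(\lceil \frac{i}{n-1}\rceil,\ n-((i-1)\bmod n))$. Then $e_m$ is distinct from each of $e_1,\dots,e_{m-1}$; that is, the arc added when constructing $\mathbb G(n,m)$ from $\mathbb G(n,m-1)$ is not already an arc of $\mathbb G(n,m-1)$.
   Context: $a\bmod b\in\{0,\dots,b-1\}$ denotes the remainder. The graphs $\mathbb G(n,m)$ on vertex set $\{1,\dots,n\}$ are built inductively: $\mathbb G(n,0)$ has no arcs, and for $1\le m\le n(n-1)$, $\mathbb G(n,m)$ is obtained from $\mathbb G(n,m-1)$ by adding the arc $e_m$ (from vertex $\lceil \frac{m}{n-1}\rceil$ to vertex $n-((m-1)\bmod n)$). *)

theory Defs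
  imports Complex_Main
begin

definition arc :: "nat \<Rightarrow> nat \<Rightarrow> nat \<times> nat" where
  "arc n i = (nat \<lceil>real i / real (n - 1)\<rceil>, n - ((i - 1) mod n))"

fun G_arcs :: "nat \<Rightarrow> nat \<Rightarrow> (nat \<times> nat) set" where
  "G_arcs n 0 = {}"
| "G_arcs n (Suc m) = insert (arc n (Suc m)) (G_arcs n m)"

end

theory Submission
  imports Defs
begin

lemma G_arcs_eq: "G_arcs n j = arc n ` {1..j}"
  by (induction j) (auto simp: atLeastAtMostSuc_conv)

lemma arc_distinct:
  fixes n m i :: nat
  assumes "n > 1" "1 \<le> i" "i < m"
  shows "arc n m \<noteq> arc n i"
proof
  assume eq: "arc n m = arc n i"
  have s: "n - ((m - 1) mod n) = n - ((i - 1) mod n)" using eq by (simp add: arc_def)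
  have "(m - 1) mod n < n" "(i - 1) mod n < n" using assms by auto
  hence md: "(m - 1) mod n = (i - 1) mod n" using s by linarith
  have le: "i - 1 \<le> m - 1" using assms by simp
  have "n dvd (m - 1) - (i - 1)" using mod_eq_dvd_iff_nat[OF le] md by simp
  moreover have "(m - 1) - (i - 1) > 0" using assms by simp
  ultimately have "n \<le> (m - 1) - (i - 1)" by (simp add: dvd_imp_le)
  hence ge: "m \<ge> i + (n - 1)" using assms by linarith
  have kpos: "real (n - 1) > 0" using assms by simp
  have "real i / real (n - 1) + 1 = real (i + (n - 1)) / real (n - 1)"
    using kpos by (simp add: field_simps)
  also have "\<dots> \<le> real m / real (n - 1)"
    using ge kpos by (simp add: divide_right_mono)
  finally have "\<lceil>real i / real (n - 1)\<rceil> + 1 \<le> \<lceil>real m / real (n - 1)\<rceil>"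
    by (metis ceiling_add_one ceiling_mono)
  moreover have "\<lceil>real i / real (n - 1)\<rceil> \<ge> 0"
  proof -
    have "real i / real (n - 1) \<ge> 0" using kpos by simp
    thus ?thesis using ceiling_mono[of 0 "real i / real (n - 1)"] by simp
  qed
  ultimately have "nat \<lceil>real m / real (n - 1)\<rceil> \<noteq> nat \<lceil>real i / real (n - 1)\<rceil>"
    by linarith
  thus False using eq by (simp add: arc_def)
qed

theorem lemma9:
  fixes n m :: nat
  assumes "n > 1" and "1 \<le> m" and "m \<le> n * (n - 1)"
  shows "(\<forall>i\<in>{1..<m}. arc n m \<noteq> arc n i) \<and> arc n m \<notin> G_arcs n (m - 1)"
proof -
  have A: "\<forall>i\<in>{1..<m}. arc n m \<noteq> arc n i" using arc_distinct assms(1) by auto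
  moreover have "arc n m \<notin> G_arcs n (m - 1)"
    unfolding G_arcs_eq using A assms(2) by fastforce
  ultimately show ?thesis by blast
qed

end
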